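(* Let $p,q$ be distinct sentential variables and let $\pi$ be any weighting function. For each of the following items, there exist a $\pi$-based selection function $\sigma$ and a $\Delta$ model $M$ with selection function $\sigma$ witnessing failure, namely: for items given as "$\varphi$ does not imply $\psi$", some world lies in $[\![\varphi]\!]_M\setminus[\![\psi]\!]_M$; for the item given as "$\psi$ is not valid", some world lies outside $[\![\psi]\!]_M$. (a) $\mathbb{P}p\wedge\mathbb{P}q$ does not imply $\mathbb{P}(p\wedge q)$; (b) $\mathbb{O}(p\vee q)$ does not imply $\mathbb{O}p\vee\mathbb{O}q$; (c) $p\rightarrow q$ does not imply $\mathbb{O}p\rightarrow\mathbb{O}q$; (d) $\mathbb{O}p$ does not imply $\mathbb{O}(p\wedge q)$; (e) $\mathbb{P}p$ does not imply $\mathbb{P}(p\wedge q)$; (f) $\mathbb{C}(p,q)\vee\mathbb{C}(q,p)$ is not valid; (g) $\mathbb{O}(p\vee q)$ does not imply $\mathbb{O}p$; (h) $\mathbb{O}p$ does not imply $p$; (i) $\mathbb{P}p$ does not imply $\mathbb{P}\mathbb{O}p$; (j) $(\neg q\succ\neg p)\wedge\mathbb{O}p$ does not imply $\mathbb{O}q$.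
   Context: Fix a set $\mathrm{PROPS}$ of sentential variables (containing $p,q$). The language $\mathcal{L}$: every $v\in\mathrm{PROPS}$ is a formula; if $\varphi,\psi$ are formulas so are $\neg\varphi$, $(\varphi\wedge\psi)$, $(\varphi\succeq\psi)$. Abbreviations: $\vee,\rightarrow,\leftrightarrow$ as usual; $\varphi\succ\psi := (\varphi\succeq\psi)\wedge\neg(\psi\succeq\varphi)$; $\top := (v_0\rightarrow v_0)$ for a fixed variable $v_0$. Deontic operators: $\mathbb{C}(\varphi,\psi) := (\varphi\wedge\psi)\succ(\varphi\wedge\neg\psi)$; $\mathbb{O}\psi := \mathbb{C}(\top,\psi)$; $\mathbb{P}\psi:=\neg\mathbb{O}\neg\psi$. A model is $M=(W,\sigma,u,t)$ with $W$ a nonempty set, $\sigma:W\times\{A\subseteq W:A\ne\emptyset\}\to W$ with $\sigma(w,A)\in A$, $u:W\to\mathbb{R}$, and $t:\mathrm{PROPS}\to\mathcal{P}(W)$. Semantics: $[\![v]\!]_M=t(v)$; $[\![\neg\theta]\!]_M=W\setminus[\![\theta]\!]_M$; $[\![\theta\wedge\psi]\!]_M=[\![\theta]\!]_M\cap[\![\psi]\!]_M$; $[\![\theta\succeq\psi]\!]_M=\emptyset$ if either $[\![\theta]\!]_M$ or $[\![\psi]\!]_M$ is empty, otherwise $\{w: u(\sigma(w,[\![\theta]\!]_M))\ge u(\sigma(w,[\![\psi]\!]_M))\}$. A $\Delta$ model is a model with $W=\mathcal{P}(\mathrm{PROPS})$, $t(v)=\{w: v\in w\}$ for all $v$, and $\sigma$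 $\Delta$-based: for all $w_0$ and nonempty $A$ there is no $w_1\in A$ with $w_0\triangle w_1\subsetneq w_0\triangle\sigma(w_0,A)$ ($\triangle$ = symmetric difference); $u$ is arbitrary. A weighting function is a map $\pi:\mathrm{PROPS}\to(0,\infty)$. For worlds $w_0,w_1$, $d_\pi(w_0,w_1):=\sum_{v\in w_0\triangle w_1}\pi(v)$. A selection function $\sigma$ (on $W=\mathcal{P}(\mathrm{PROPS})$) is $\pi$-based if for every $w\in W$ and nonempty $A\subseteq W$ there is no $w'\in A$ with $d_\pi(w,w')<d_\pi(w,\sigma(w,A))$. *)

theory Defs
  imports Complex_Main
begin

text \<open>Formulas of the language L over sentential variables of type 'v.
  PROPS is the (finite) universe of the type 'v.\<close>

datatype 'v form = Var 'v | Neg "'v form" | Conj "'v form" "'v form" | Pref "'v form" "'v form"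

definition Disj :: "'v form \<Rightarrow> 'v form \<Rightarrow> 'v form" where
  "Disj a b = Neg (Conj (Neg a) (Neg b))"

definition Imp :: "'v form \<Rightarrow> 'v form \<Rightarrow> 'v form" where
  "Imp a b = Neg (Conj a (Neg b))"

definition SPref :: "'v form \<Rightarrow> 'v form \<Rightarrow> 'v form" where
  "SPref a b = Conj (Pref a b) (Neg (Pref b a))"

definition Top :: "'v \<Rightarrow> 'v form" where
  "Top v0 = Imp (Var v0) (Var v0)"

definition Cond :: "'v \<Rightarrow> 'v form \<Rightarrow> 'v form \<Rightarrow> 'v form" where
  "Cond v0 a b = SPref (Conj a b) (Conj a (Neg b))"

definition Obl :: "'v \<Rightarrow> 'v form \<Rightarrow> 'v form" where
  "Obl v0 b = Cond v0 (Top v0) b"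

definition Perm :: "'v \<Rightarrow> 'v form \<Rightarrow> 'v form" where
  "Perm v0 b = Neg (Obl v0 (Neg b))"

definition is_model :: "'w set \<Rightarrow> ('w \<Rightarrow> 'w set \<Rightarrow> 'w) \<Rightarrow> ('w \<Rightarrow> real) \<Rightarrow> ('v \<Rightarrow> 'w set) \<Rightarrow> bool" where
  "is_model W \<sigma> u t \<longleftrightarrow> W \<noteq> {} \<and>
     (\<forall>w\<in>W. \<forall>A. A \<subseteq> W \<and> A \<noteq> {} \<longrightarrow> \<sigma> w A \<in> A) \<and> (\<forall>v. t v \<subseteq> W)"

fun sem :: "'w set \<Rightarrow> ('w \<Rightarrow> 'w set \<Rightarrow> 'w) \<Rightarrow> ('w \<Rightarrow> real) \<Rightarrow> ('v \<Rightarrow> 'w set) \<Rightarrow> 'v form \<Rightarrow> 'w set" where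
  "sem W \<sigma> u t (Var v) = t v"
| "sem W \<sigma> u t (Neg a) = W - sem W \<sigma> u t a"
| "sem W \<sigma> u t (Conj a b) = sem W \<sigma> u t a \<inter> sem W \<sigma> u t b"
| "sem W \<sigma> u t (Pref a b) =
     (let A = sem W \<sigma> u t a; B = sem W \<sigma> u t b in
      if A = {} \<or> B = {} then {} else {w \<in> W. u (\<sigma> w A) \<ge> u (\<sigma> w B)})"

text \<open>Delta models: W = P(PROPS) (here: all sets of type 'v set), t v = {w. v \<in> w}.\<close>

definition symdiff :: "'a set \<Rightarrow> 'a set \<Rightarrow> 'a set" where
  "symdiff a b = (a - b) \<union> (b - a)"

definition delta_t :: "'v \<Rightarrow> 'v set set" where
  "delta_t v = {w. v \<in> w}"

definition delta_based :: "('v set \<Rightarrow> 'v set set \<Rightarrow> 'v set) \<Rightarrow> bool" where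
  "delta_based \<sigma> \<longleftrightarrow> (\<forall>w0 A. A \<noteq> {} \<longrightarrow>
      \<not> (\<exists>w1\<in>A. symdiff w0 w1 \<subset> symdiff w0 (\<sigma> w0 A)))"

definition delta_model :: "('v set \<Rightarrow> 'v set set \<Rightarrow> 'v set) \<Rightarrow> ('v set \<Rightarrow> real) \<Rightarrow> bool" where
  "delta_model \<sigma> u \<longleftrightarrow> is_model UNIV \<sigma> u delta_t \<and> delta_based \<sigma>"

abbreviation dsem :: "('v set \<Rightarrow> 'v set set \<Rightarrow> 'v set) \<Rightarrow> ('v set \<Rightarrow> real) \<Rightarrow> 'v form \<Rightarrow> 'v set set" where
  "dsem \<sigma> u \<equiv> sem UNIV \<sigma> u delta_t"

definition weighting :: "('v \<Rightarrow> real) \<Rightarrow> bool" where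
  "weighting \<pi> \<longleftrightarrow> (\<forall>v. \<pi> v > 0)"

definition dist_pi :: "('v \<Rightarrow> real) \<Rightarrow> 'v set \<Rightarrow> 'v set \<Rightarrow> real" where
  "dist_pi \<pi> w0 w1 = (\<Sum>v\<in>symdiff w0 w1. \<pi> v)"

definition pi_based :: "('v \<Rightarrow> real) \<Rightarrow> ('v set \<Rightarrow> 'v set set \<Rightarrow> 'v set) \<Rightarrow> bool" where
  "pi_based \<pi> \<sigma> \<longleftrightarrow> (\<forall>w A. A \<noteq> {} \<longrightarrow>
      \<not> (\<exists>w'\<in>A. dist_pi \<pi> w w' < dist_pi \<pi> w (\<sigma> w A)))"

definition refutes_impl :: "('v::finite \<Rightarrow> real) \<Rightarrow> 'v form \<Rightarrow> 'v form \<Rightarrow> bool" where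
  "refutes_impl \<pi> \<phi> \<psi> \<longleftrightarrow> (\<exists>\<sigma> u. pi_based \<pi> \<sigma> \<and> delta_model \<sigma> u \<and>
      (\<exists>w. w \<in> dsem \<sigma> u \<phi> \<and> w \<notin> dsem \<sigma> u \<psi>))"

definition refutes_valid :: "('v::finite \<Rightarrow> real) \<Rightarrow> 'v form \<Rightarrow> bool" where
  "refutes_valid \<pi> \<psi> \<longleftrightarrow> (\<exists>\<sigma> u. pi_based \<pi> \<sigma> \<and> delta_model \<sigma> u \<and>
      (\<exists>w. w \<notin> dsem \<sigma> u \<psi>))"

end

theory Submission
  imports Defs
begin

definition sel :: "('v::finite \<Rightarrow> real) \<Rightarrow> 'v set \<Rightarrow> 'v set set \<Rightarrow> 'v set" where
  "sel \<pi> w A = (SOME x. x \<in> A \<and> (\<forall>y\<in>A. dist_pi \<pi> w x \<le> dist_pi \<pi> w y))"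

lemma sel_prop:
  fixes A :: "'v::finite set set"
  assumes "A \<noteq> {}"
  shows "sel \<pi> w A \<in> A \<and> (\<forall>y\<in>A. dist_pi \<pi> w (sel \<pi> w A) \<le> dist_pi \<pi> w y)"
proof -
  have fin: "finite ((dist_pi \<pi> w) ` A)" by simp
  have "Min ((dist_pi \<pi> w) ` A) \<in> (dist_pi \<pi> w) ` A" using assms fin by (intro Min_in) auto
  then obtain x where x: "x \<in> A" "dist_pi \<pi> w x = Min ((dist_pi \<pi> w) ` A)" by auto
  have "\<forall>y\<in>A. dist_pi \<pi> w x \<le> dist_pi \<pi> w y" using x fin by auto
  then have "\<exists>x. x \<in> A \<and> (\<forall>y\<in>A. dist_pi \<pi> w x \<le> dist_pi \<pi> w y)" using x by blast
  then show ?thesis unfolding sel_def by (rule someI_ex)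
qed

lemma pi_based_sel: "pi_based \<pi> (sel \<pi>)"
  unfolding pi_based_def using sel_prop by (meson not_less)

lemma dist_strict:
  fixes a b :: "'v::finite set"
  assumes "weighting \<pi>" "symdiff w a \<subset> symdiff w b"
  shows "dist_pi \<pi> w a < dist_pi \<pi> w b"
proof -
  obtain c where c: "c \<in> symdiff w b - symdiff w a" using assms(2) by blast
  show ?thesis unfolding dist_pi_def
    apply (rule sum_strict_mono2[OF _ _ c])
    using assms by (auto simp: weighting_def less_imp_le)
qed

lemma delta_based_sel: "weighting \<pi> \<Longrightarrow> delta_based (sel \<pi>)"
  unfolding delta_based_def using sel_prop dist_strict by (metis not_less)

lemma delta_model_sel: "weighting \<pi> \<Longrightarrow> delta_model (sel \<pi>) u"
  unfolding delta_model_def is_model_def using delta_based_sel sel_prop by blast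

lemma symdiff_inj: "symdiff w a = symdiff w b \<Longrightarrow> a = b"
  unfolding symdiff_def by blast

lemma sel_unique:
  fixes A :: "'v::finite set set"
  assumes "weighting \<pi>" "x \<in> A" "\<And>y. y \<in> A \<Longrightarrow> symdiff w x \<subseteq> symdiff w y"
  shows "sel \<pi> w A = x"
proof (rule ccontr)
  assume ne: "sel \<pi> w A \<noteq> x"
  have s: "sel \<pi> w A \<in> A" "dist_pi \<pi> w (sel \<pi> w A) \<le> dist_pi \<pi> w x"
    using sel_prop[of A \<pi> w] assms(2) by auto
  have "symdiff w x \<subset> symdiff w (sel \<pi> w A)"
    using assms(3)[OF s(1)] ne symdiff_inj by blast
  then have "dist_pi \<pi> w x < dist_pi \<pi> w (sel \<pi> w A)" by (rule dist_strict[OF assms(1)])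
  then show False using s(2) by linarith
qed

lemma sem_Var: "dsem \<sigma> u (Var p) = {x. p \<in> x}" by (simp add: delta_t_def)
lemma sem_Conj: "dsem \<sigma> u (Conj a b) = dsem \<sigma> u a \<inter> dsem \<sigma> u b" by simp
lemma sem_Neg: "dsem \<sigma> u (Neg a) = UNIV - dsem \<sigma> u a" by simp
lemma sem_Disj: "dsem \<sigma> u (Disj a b) = dsem \<sigma> u a \<union> dsem \<sigma> u b" by (auto simp: Disj_def)
lemma sem_Imp: "dsem \<sigma> u (Imp a b) = (UNIV - dsem \<sigma> u a) \<union> dsem \<sigma> u b" by (auto simp: Imp_def)
lemma sem_SPref: "w \<in> dsem \<sigma> u (SPref a b) \<longleftrightarrow> dsem \<sigma> u a \<noteq> {} \<and> dsem \<sigma> u b \<noteq> {}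
   \<and> u (\<sigma> w (dsem \<sigma> u a)) > u (\<sigma> w (dsem \<sigma> u b))"
  by (auto simp: SPref_def Let_def)
lemma sem_Top: "dsem \<sigma> u (Top v0) = UNIV" by (auto simp: Top_def Imp_def)
lemma sem_Cond: "w \<in> dsem \<sigma> u (Cond v0 a b) \<longleftrightarrow> dsem \<sigma> u a \<inter> dsem \<sigma> u b \<noteq> {} \<and> dsem \<sigma> u a - dsem \<sigma> u b \<noteq> {}
   \<and> u (\<sigma> w (dsem \<sigma> u a \<inter> dsem \<sigma> u b)) > u (\<sigma> w (dsem \<sigma> u a - dsem \<sigma> u b))"
  unfolding Cond_def sem_SPref by (simp add: Diff_eq)
lemma sem_Obl: "w \<in> dsem \<sigma> u (Obl v0 b) \<longleftrightarrow> dsem \<sigma> u b \<noteq> {} \<and> UNIV - dsem \<sigma> u b \<noteq> {}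
   \<and> u (\<sigma> w (dsem \<sigma> u b)) > u (\<sigma> w (UNIV - dsem \<sigma> u b))"
  unfolding Obl_def sem_Cond sem_Top by simp
lemma sem_Perm: "w \<in> dsem \<sigma> u (Perm v0 b) \<longleftrightarrow> \<not> (UNIV - dsem \<sigma> u b \<noteq> {} \<and> dsem \<sigma> u b \<noteq> {}
   \<and> u (\<sigma> w (UNIV - dsem \<sigma> u b)) > u (\<sigma> w (dsem \<sigma> u b)))"
  unfolding Perm_def sem_Neg[of _ _ "Obl v0 (Neg b)"] using sem_Obl[of w _ _ v0 "Neg b"]
  by (simp add: double_diff)

lemma sel_self: "weighting \<pi> \<Longrightarrow> w \<in> A \<Longrightarrow> sel \<pi> w A = w"
  by (rule sel_unique) (auto simp: symdiff_def)

lemma refutes_implI: "weighting \<pi> \<Longrightarrow> w \<in> dsem (sel \<pi>) u \<phi> \<Longrightarrow> w \<notin> dsem (sel \<pi>) u \<psi> \<Longrightarrow> refutes_impl \<pi> \<phi> \<psi>"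
  unfolding refutes_impl_def using pi_based_sel delta_model_sel by blast

lemma refutes_validI: "weighting \<pi> \<Longrightarrow> w \<notin> dsem (sel \<pi>) u \<psi> \<Longrightarrow> refutes_valid \<pi> \<psi>"
  unfolding refutes_valid_def using pi_based_sel delta_model_sel by blast

lemmas sems = sem_Perm sem_Obl sem_Cond sem_SPref sem_Conj sem_Neg sem_Disj sem_Imp sem_Var

lemma item_a:
  fixes p q v0 :: "'v::finite"
  assumes pq: "p \<noteq> q" and w: "weighting \<pi>"
  shows "refutes_impl \<pi> (Conj (Perm v0 (Var p)) (Perm v0 (Var q))) (Perm v0 (Conj (Var p) (Var q)))"
proof (rule refutes_implI[OF w, where w="{}" and u="\<lambda>x. if p \<in> x \<and> q \<in> x then -1 else 0"])
  have s1: "sel \<pi> {} {x. p \<in> x} = {p}" by (rule sel_unique[OF w]) (auto simp: symdiff_def)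
  have s2: "sel \<pi> {} {x. q \<in> x} = {q}" by (rule sel_unique[OF w]) (auto simp: symdiff_def)
  have s3: "sel \<pi> {} ({x. p \<in> x} \<inter> {x. q \<in> x}) = {p,q}" by (rule sel_unique[OF w]) (auto simp: symdiff_def)
  have n: "{p} \<in> {x. p \<in> x}" "{q} \<in> {x. q \<in> x}" "{p,q} \<in> {x. p \<in> x} \<inter> {x. q \<in> x}" by auto
  show "{} \<in> dsem (sel \<pi>) (\<lambda>x. if p \<in> x \<and> q \<in> x then -1 else 0) (Conj (Perm v0 (Var p)) (Perm v0 (Var q)))"
    apply (simp only: sems Int_iff)
    using s1 s2 pq by (simp add: sel_self[OF w])
  show "{} \<notin> dsem (sel \<pi>) (\<lambda>x. if p \<in> x \<and> q \<in> x then -1 else 0) (Perm v0 (Conj (Var p) (Var q)))"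
    unfolding sems using s3 n by (auto simp: sel_self[OF w])
qed

lemma item_e:
  fixes p q v0 :: "'v::finite"
  assumes pq: "p \<noteq> q" and w: "weighting \<pi>"
  shows "refutes_impl \<pi> (Perm v0 (Var p)) (Perm v0 (Conj (Var p) (Var q)))"
proof (rule refutes_implI[OF w, where w="{}" and u="\<lambda>x. if p \<in> x \<and> q \<in> x then -1 else 0"])
  have s1: "sel \<pi> {} {x. p \<in> x} = {p}" by (rule sel_unique[OF w]) (auto simp: symdiff_def)
  have s3: "sel \<pi> {} ({x. p \<in> x} \<inter> {x. q \<in> x}) = {p,q}" by (rule sel_unique[OF w]) (auto simp: symdiff_def)
  have n: "{p} \<in> {x. p \<in> x}" "{p,q} \<in> {x. p \<in> x} \<inter> {x. q \<in> x}" by auto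
  show "{} \<in> dsem (sel \<pi>) (\<lambda>x. if p \<in> x \<and> q \<in> x then -1 else 0) (Perm v0 (Var p))"
    apply (simp only: sems Int_iff)
    using s1 pq by (simp add: sel_self[OF w])
  show "{} \<notin> dsem (sel \<pi>) (\<lambda>x. if p \<in> x \<and> q \<in> x then -1 else 0) (Perm v0 (Conj (Var p) (Var q)))"
    unfolding sems using s3 n by (auto simp: sel_self[OF w])
qed

lemma ex_mem_aux[simp]: "\<exists>x::'a set. p \<in> x" by blast
lemma univ_aux1[simp]: "(UNIV \<subseteq> Collect ((\<in>) (p::'a)) \<union> Collect ((\<in>) q)) = False" by blast
lemma univ_aux2[simp]: "(UNIV \<subseteq> Collect ((\<in>) (p::'a))) = False" by blast

lemma sel_add: "weighting \<pi> \<Longrightarrow> p \<notin> w \<Longrightarrow> sel \<pi> w {y. p \<in> y} = insert p w"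
  by (rule sel_unique) (auto simp: symdiff_def)

lemma sel_rem: "weighting \<pi> \<Longrightarrow> p \<in> w \<Longrightarrow> sel \<pi> w (UNIV - {y. p \<in> y}) = w - {p}"
  by (rule sel_unique) (auto simp: symdiff_def)

lemma item_b:
  fixes p q v0 :: "'v::finite"
  assumes pq: "p \<noteq> q" and w: "weighting \<pi>"
  shows "refutes_impl \<pi> (Obl v0 (Disj (Var p) (Var q))) (Disj (Obl v0 (Var p)) (Obl v0 (Var q)))
    \<and> refutes_impl \<pi> (Obl v0 (Disj (Var p) (Var q))) (Obl v0 (Var p))"
proof -
  let ?u = "\<lambda>x. if p \<notin> x \<and> q \<notin> x then -1 else (0::real)"
  have s1: "sel \<pi> {p,q} (UNIV - ({x. p \<in> x} \<union> {x. q \<in> x})) = {}" by (rule sel_unique[OF w]) (auto simp: symdiff_def)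
  have s2: "sel \<pi> {p,q} (UNIV - {x. p \<in> x}) = {q}" using sel_rem[OF w, of p "{p,q}"] pq by auto
  have s3: "sel \<pi> {p,q} (UNIV - {x. q \<in> x}) = {p}" using sel_rem[OF w, of q "{p,q}"] pq by auto
  have A: "{p,q} \<in> dsem (sel \<pi>) ?u (Obl v0 (Disj (Var p) (Var q)))"
    apply (simp only: sems Int_iff)
    using s1 pq by (simp add: sel_self[OF w])
  have B: "{p,q} \<notin> dsem (sel \<pi>) ?u (Obl v0 (Var p))"
    apply (simp only: sems Int_iff)
    using s2 pq by (simp add: sel_self[OF w])
  have C: "{p,q} \<notin> dsem (sel \<pi>) ?u (Obl v0 (Var q))"
    apply (simp only: sems Int_iff)
    using s3 pq by (simp add: sel_self[OF w])
  have D: "{p,q} \<notin> dsem (sel \<pi>) ?u (Disj (Obl v0 (Var p)) (Obl v0 (Var q)))"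
    using B C by (simp only: sem_Disj Un_iff) simp
  show ?thesis using refutes_implI[OF w A D] refutes_implI[OF w A B] by blast
qed

lemma item_cdhj:
  fixes p q v0 :: "'v::finite"
  assumes pq: "p \<noteq> q" and w: "weighting \<pi>"
  shows "refutes_impl \<pi> (Imp (Var p) (Var q)) (Imp (Obl v0 (Var p)) (Obl v0 (Var q)))
    \<and> refutes_impl \<pi> (Obl v0 (Var p)) (Obl v0 (Conj (Var p) (Var q)))
    \<and> refutes_impl \<pi> (Obl v0 (Var p)) (Var p)
    \<and> refutes_impl \<pi> (Conj (SPref (Neg (Var q)) (Neg (Var p))) (Obl v0 (Var p))) (Obl v0 (Var q))"
proof -
  let ?u = "\<lambda>x. if p \<in> x \<and> q \<notin> x then 1 else (0::real)"
  have s1: "sel \<pi> {} ({x. p \<in> x} \<inter> {x. q \<in> x}) = {p,q}" by (rule sel_unique[OF w]) (auto simp: symdiff_def)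
  have s2: "sel \<pi> {p} (UNIV - {x. p \<in> x}) = {}" using sel_rem[OF w, of p "{p}"] by auto
  have s3: "sel \<pi> {p} {x. q \<in> x} = {p,q}" using sel_add[OF w, of q "{p}"] pq by auto
  have Op: "{} \<in> dsem (sel \<pi>) ?u (Obl v0 (Var p))"
    apply (simp only: sems Int_iff)
    using pq by (simp add: sel_self[OF w] sel_add[OF w])
  have Oq: "{} \<notin> dsem (sel \<pi>) ?u (Obl v0 (Var q))"
    apply (simp only: sems Int_iff)
    using pq by (simp add: sel_self[OF w] sel_add[OF w])
  have Opq: "{} \<notin> dsem (sel \<pi>) ?u (Obl v0 (Conj (Var p) (Var q)))"
    apply (simp only: sems Int_iff)
    using pq s1 by (simp add: sel_self[OF w])
  have I1: "{} \<in> dsem (sel \<pi>) ?u (Imp (Var p) (Var q))" by (simp add: sems delta_t_def)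
  have I2: "{} \<notin> dsem (sel \<pi>) ?u (Imp (Obl v0 (Var p)) (Obl v0 (Var q)))"
    using Op Oq by (simp only: sem_Imp Un_iff Diff_iff) simp
  have P: "{} \<notin> dsem (sel \<pi>) ?u (Var p)" by (simp add: sems delta_t_def)
  have J1: "{p} \<in> dsem (sel \<pi>) ?u (Conj (SPref (Neg (Var q)) (Neg (Var p))) (Obl v0 (Var p)))"
    apply (simp only: sems Int_iff)
    using pq s2 by (simp add: sel_self[OF w])
  have J2: "{p} \<notin> dsem (sel \<pi>) ?u (Obl v0 (Var q))"
    apply (simp only: sems Int_iff)
    using pq s3 by (simp add: sel_self[OF w])
  show ?thesis using refutes_implI[OF w I1 I2] refutes_implI[OF w Op Opq] refutes_implI[OF w Op P]
     refutes_implI[OF w J1 J2] by blast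
qed

lemma item_f:
  fixes p q v0 :: "'v::finite"
  assumes w: "weighting \<pi>"
  shows "refutes_valid \<pi> (Disj (Cond v0 (Var p) (Var q)) (Cond v0 (Var q) (Var p)))"
  by (rule refutes_validI[OF w, where w="{}" and u="\<lambda>x. 0"]) (simp only: sems Un_iff, simp)

lemma item_i:
  fixes p q v0 :: "'v::finite"
  assumes pq: "p \<noteq> q" and w: "weighting \<pi>"
  shows "refutes_impl \<pi> (Perm v0 (Var p)) (Perm v0 (Obl v0 (Var p)))"
proof -
  let ?u = "\<lambda>x. if p \<notin> x \<and> q \<in> x then -1 else (0::real)"
  have O: "dsem (sel \<pi>) ?u (Obl v0 (Var p)) = {x. q \<in> x}"
  proof (rule set_eqI)
    fix x :: "'v set"
    show "x \<in> dsem (sel \<pi>) ?u (Obl v0 (Var p)) \<longleftrightarrow> x \<in> {x. q \<in> x}"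
    proof (cases "p \<in> x")
      case True
      then show ?thesis
        apply (simp only: sems)
        using pq by (simp add: sel_self[OF w] sel_rem[OF w]; blast)
    next
      case False
      have "sel \<pi> x (UNIV - {x. p \<in> x}) = x" using False by (simp add: sel_self[OF w])
      then show ?thesis
        apply (simp only: sems)
        using pq False by (simp add: sel_add[OF w]; blast)
    qed
  qed
  have A: "{} \<in> dsem (sel \<pi>) ?u (Perm v0 (Var p))"
    apply (simp only: sems)
    using pq by (simp add: sel_self[OF w] sel_add[OF w])
  have B: "{} \<notin> dsem (sel \<pi>) ?u (Perm v0 (Obl v0 (Var p)))"
    apply (simp only: sem_Perm O)
    using pq by (simp add: sel_self[OF w] sel_add[OF w]; blast)
  show ?thesis by (rule refutes_implI[OF w A B])
qed

theorem proposition5p6: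
  fixes p q v0 :: "'v::finite" and \<pi> :: "'v \<Rightarrow> real"
  assumes "p \<noteq> q" and "weighting \<pi>"
  shows "refutes_impl \<pi> (Conj (Perm v0 (Var p)) (Perm v0 (Var q))) (Perm v0 (Conj (Var p) (Var q)))
    \<and> refutes_impl \<pi> (Obl v0 (Disj (Var p) (Var q))) (Disj (Obl v0 (Var p)) (Obl v0 (Var q)))
    \<and> refutes_impl \<pi> (Imp (Var p) (Var q)) (Imp (Obl v0 (Var p)) (Obl v0 (Var q)))
    \<and> refutes_impl \<pi> (Obl v0 (Var p)) (Obl v0 (Conj (Var p) (Var q)))
    \<and> refutes_impl \<pi> (Perm v0 (Var p)) (Perm v0 (Conj (Var p) (Var q)))
    \<and> refutes_valid \<pi> (Disj (Cond v0 (Var p) (Var q)) (Cond v0 (Var q) (Var p)))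
    \<and> refutes_impl \<pi> (Obl v0 (Disj (Var p) (Var q))) (Obl v0 (Var p))
    \<and> refutes_impl \<pi> (Obl v0 (Var p)) (Var p)
    \<and> refutes_impl \<pi> (Perm v0 (Var p)) (Perm v0 (Obl v0 (Var p)))
    \<and> refutes_impl \<pi> (Conj (SPref (Neg (Var q)) (Neg (Var p))) (Obl v0 (Var p))) (Obl v0 (Var q))"
  using item_a[OF assms] item_b[OF assms] item_cdhj[OF assms] item_e[OF assms] item_f[OF assms(2)]
    item_i[OF assms] by blast

end
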